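(* Consider a run of the algorithm CTG (defined in the context), with $f(\emptyset)=0$, in which the events $\mathcal{E}_1,\mathcal{E}_2,\mathcal{E}_3$ (defined in the context) all hold. Then whenever an element $s$ is added to the solution set $S$ (with $S$ denoting the solution set just before the addition), $$\Delta f(S,s)\ge\frac{1-\alpha}{\kappa}\big(f(OPT)-f(S)\big)-2\epsilon.$$
   Context: Let $U$ be a finite ground set with $|U|=n$, and let $f:2^U\to\mathbb{R}_{\geq 0}$ be monotone and submodular. For $X\subseteq U$, $u\in U$, write $\Delta f(X,u)=f(X\cup\{u\})-f(X)$. Let $\kappa$ be a positive integer and let $OPT$ be an optimal solution of $\max\{f(X): X\subseteq U,|X|\le\kappa\}$. There is no value oracle for $f$; instead, for any $X\subseteq U$, $u\in U$, one can draw independent samples from a distribution $\mathcal{D}(X,u)$ with $\mathbb{E}[\mathcal{D}(X,u)]=\Delta f(X,u)$ and all samples lying in $[0,R]$; all samples drawn are independent. Logarithms are natural; $h(\alpha)=\log(\kappa/\alpha)/\alpha$. For a call of CS on $(S,u)$, regard its samples as initial terms of an infinite i.i.d. sequence from $\mathcal{D}(S,u)$ and let $\widehat{\Delta f_t}(S,u)$ be the average of the first $t$ terms. Procedure CS$(w,\epsilon,\delta,S,u)$: let $N_2=R^2\log(6nh(\alpha)/\delta)/(2\epsilon^2)$. For $t=1,2,\dots,N_2$: draw the $t$-th sample, update $\widehat{\Delta f_t}(S,u)$, set $C_t=R\sqrt{\log(12nh(\alpha)t^2/\delta)/(2t)}$; if $\widehat{\Delta f_t}(S,u)-C_t\ge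 w-\epsilon$ return true; else if $\widehat{\Delta f_t}(S,u)+C_t\le w+\epsilon$ return false. If the loop completes, return true iff $\widehat{\Delta f_{N_2}}(S,u)\ge w$. Algorithm CTG$(\epsilon,\delta,\alpha)$ with $\epsilon,\delta,\alpha\in(0,1)$: let $N_1=R^2\log(6n/\delta)/(2\epsilon^2)$. For each $s\in U$ let $\hat f(s)$ be the mean of $N_1$ samples from $\mathcal{D}(\emptyset,s)$, and let $d=\max_{s\in U}\hat f(s)$. Set $w\gets d$, $S\gets\emptyset$. While $w>\alpha d/\kappa$: for each $u\in U$ in turn, if $|S|<\kappa$, call CS$(w,\epsilon,\delta,S,u)$ and if it returns true set $S\gets S\cup\{u\}$; after the pass set $w\gets w(1-\alpha)$. Return $S$. Events: $\mathcal{E}_1$: $\max_{s\in U}f(\{s\})-\epsilon\le d\le\max_{s\in U}f(\{s\})+\epsilon$. $\mathcal{E}_2$: for every call of CS on a pair $(S,u)$ and every $t\in\mathbb{N}_+$, $|\widehat{\Delta f_t}(S,u)-\Delta f(S,u)|\le C_t$. $\mathcal{E}_3$: for every call of CS on a pair $(S,u)$, $|\widehat{\Delta f_{N_2}}(S,u)-\Delta f(S,u)|\le\epsilon$. *)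

theory Defs
  imports "HOL-Analysis.Analysis"
begin

definition Delta :: "('a set \<Rightarrow> real) \<Rightarrow> 'a set \<Rightarrow> 'a \<Rightarrow> real" where
  "Delta f X u = f (insert u X) - f X"

definition monotone_set_fun :: "'a set \<Rightarrow> ('a set \<Rightarrow> real) \<Rightarrow> bool" where
  "monotone_set_fun U f \<longleftrightarrow> (\<forall>X Y. X \<subseteq> Y \<and> Y \<subseteq> U \<longrightarrow> f X \<le> f Y)"

definition submodular_set_fun :: "'a set \<Rightarrow> ('a set \<Rightarrow> real) \<Rightarrow> bool" where
  "submodular_set_fun U f \<longleftrightarrow>
     (\<forall>X Y x. X \<subseteq> Y \<and> Y \<subseteq> U \<and> x \<in> U - Y \<longrightarrow> Delta f Y x \<le> Delta f X x)"

definition hfun :: "nat \<Rightarrow> real \<Rightarrow> real" where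
  "hfun \<kappa> \<alpha> = ln (real \<kappa> / \<alpha>) / \<alpha>"

text \<open>Average of the first t terms of a sample sequence (the t-th sample is xs (t-1)).\<close>
definition avg :: "(nat \<Rightarrow> real) \<Rightarrow> nat \<Rightarrow> real" where
  "avg xs t = (\<Sum>i<t. xs i) / real t"

definition N1 :: "real \<Rightarrow> nat \<Rightarrow> real \<Rightarrow> real \<Rightarrow> nat" where
  "N1 R n \<epsilon> \<delta> = nat \<lceil>R\<^sup>2 * ln (6 * real n / \<delta>) / (2 * \<epsilon>\<^sup>2)\<rceil>"

definition N2 :: "real \<Rightarrow> nat \<Rightarrow> nat \<Rightarrow> real \<Rightarrow> real \<Rightarrow> real \<Rightarrow> nat" where
  "N2 R n \<kappa> \<alpha> \<epsilon> \<delta> = nat \<lceil>R\<^sup>2 * ln (6 * real n * hfun \<kappa> \<alpha> / \<delta>) / (2 * \<epsilon>\<^sup>2)\<rceil>"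

definition Ct :: "real \<Rightarrow> nat \<Rightarrow> nat \<Rightarrow> real \<Rightarrow> real \<Rightarrow> nat \<Rightarrow> real" where
  "Ct R n \<kappa> \<alpha> \<delta> t =
     R * sqrt (ln (12 * real n * hfun \<kappa> \<alpha> * (real t)\<^sup>2 / \<delta>) / (2 * real t))"

text \<open>Procedure CS, run on the (infinite) sample sequence xs of the call.\<close>
definition CS :: "real \<Rightarrow> nat \<Rightarrow> nat \<Rightarrow> real \<Rightarrow> real \<Rightarrow> real \<Rightarrow> real \<Rightarrow> (nat \<Rightarrow> real) \<Rightarrow> bool" where
  "CS R n \<kappa> \<alpha> \<epsilon> \<delta> w xs =
    (let N = N2 R n \<kappa> \<alpha> \<epsilon> \<delta>;
         up = (\<lambda>t. avg xs t - Ct R n \<kappa> \<alpha> \<delta> t \<ge> w - \<epsilon>);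
         lo = (\<lambda>t. avg xs t + Ct R n \<kappa> \<alpha> \<delta> t \<le> w + \<epsilon>)
     in case find (\<lambda>t. up t \<or> lo t) [1..<N+1] of
          Some t \<Rightarrow> up t
        | None \<Rightarrow> avg xs N \<ge> w)"

text \<open>State of CTG: current solution S and the log of all CS calls made so far,
  each entry (S, u, w, result) recording the solution before the call, the element,
  the threshold and the returned value. The k-th call (0-based) uses the sample
  sequence smp k.\<close>
type_synonym 'a ctg_state = "'a set \<times> ('a set \<times> 'a \<times> real \<times> bool) list"

definition ctg_step :: "real \<Rightarrow> nat \<Rightarrow> nat \<Rightarrow> real \<Rightarrow> real \<Rightarrow> real \<Rightarrow> real
    \<Rightarrow> (nat \<Rightarrow> nat \<Rightarrow> real) \<Rightarrow> 'a ctg_state \<Rightarrow> 'a \<Rightarrow> 'a ctg_state" where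
  "ctg_step R n \<kappa> \<alpha> \<epsilon> \<delta> w smp st u =
    (case st of (S, lg) \<Rightarrow>
      if card S < \<kappa> then
        (let r = CS R n \<kappa> \<alpha> \<epsilon> \<delta> w (smp (length lg))
         in (if r then insert u S else S, lg @ [(S, u, w, r)]))
      else (S, lg))"

definition ctg_pass :: "real \<Rightarrow> nat \<Rightarrow> real \<Rightarrow> real \<Rightarrow> real \<Rightarrow> 'a list \<Rightarrow> real
    \<Rightarrow> (nat \<Rightarrow> nat \<Rightarrow> real) \<Rightarrow> 'a ctg_state \<Rightarrow> 'a ctg_state" where
  "ctg_pass R \<kappa> \<alpha> \<epsilon> \<delta> us w smp st =
     foldl (ctg_step R (length us) \<kappa> \<alpha> \<epsilon> \<delta> w smp) st us"

text \<open>The value d computed from the initial samples smp0 s of D(emptyset, s).\<close>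
definition ctg_d :: "real \<Rightarrow> real \<Rightarrow> real \<Rightarrow> 'a list \<Rightarrow> ('a \<Rightarrow> nat \<Rightarrow> real) \<Rightarrow> real" where
  "ctg_d R \<epsilon> \<delta> us smp0 =
     Max ((\<lambda>s. avg (smp0 s) (N1 R (length us) \<epsilon> \<delta>)) ` set us)"

text \<open>Number of passes of the while loop: w = d (1-alpha)^p in pass p.\<close>
definition ctg_npasses :: "real \<Rightarrow> nat \<Rightarrow> real \<Rightarrow> nat" where
  "ctg_npasses d \<kappa> \<alpha> = (LEAST p. \<not> (d * (1 - \<alpha>) ^ p > \<alpha> * d / real \<kappa>))"

definition ctg_run :: "real \<Rightarrow> nat \<Rightarrow> real \<Rightarrow> real \<Rightarrow> real \<Rightarrow> 'a list
    \<Rightarrow> ('a \<Rightarrow> nat \<Rightarrow> real) \<Rightarrow> (nat \<Rightarrow> nat \<Rightarrow> real) \<Rightarrow> 'a ctg_state" where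
  "ctg_run R \<kappa> \<alpha> \<epsilon> \<delta> us smp0 smp =
    (let d = ctg_d R \<epsilon> \<delta> us smp0
     in foldl (\<lambda>st p. ctg_pass R \<kappa> \<alpha> \<epsilon> \<delta> us (d * (1 - \<alpha>) ^ p) smp st)
              ({}, []) [0..<ctg_npasses d \<kappa> \<alpha>])"

end

theory Submission imports Defs begin

lemma find_some_mem: "List.find P xs = Some t \<Longrightarrow> t \<in> set xs \<and> P t"
  by (auto simp: find_Some_iff)

lemma CS_bound:
  assumes e2: "\<forall>t\<ge>1. \<bar>avg xs t - D\<bar> \<le> Ct R n \<kappa> \<alpha> \<delta> t"
    and e3: "\<bar>avg xs (N2 R n \<kappa> \<alpha> \<epsilon> \<delta>) - D\<bar> \<le> \<epsilon>"
  shows "(CS R n \<kappa> \<alpha> \<epsilon> \<delta> w xs \<longrightarrow> D \<ge> w - \<epsilon>) \<and> (\<not> CS R n \<kappa> \<alpha> \<epsilon> \<delta> w xs \<longrightarrow> D \<le> w + \<epsilon>)"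
proof (cases "List.find (\<lambda>t. avg xs t - Ct R n \<kappa> \<alpha> \<delta> t \<ge> w - \<epsilon> \<or> avg xs t + Ct R n \<kappa> \<alpha> \<delta> t \<le> w + \<epsilon>) [1..<N2 R n \<kappa> \<alpha> \<epsilon> \<delta>+1]")
  case None
  then show ?thesis using e3 unfolding CS_def Let_def by (auto simp: abs_le_iff)
next
  case (Some t)
  from find_some_mem[OF Some] have t: "t \<ge> 1" and P: "avg xs t - Ct R n \<kappa> \<alpha> \<delta> t \<ge> w - \<epsilon> \<or> avg xs t + Ct R n \<kappa> \<alpha> \<delta> t \<le> w + \<epsilon>" by auto
  have "\<bar>avg xs t - D\<bar> \<le> Ct R n \<kappa> \<alpha> \<delta> t" using e2 t by auto
  then show ?thesis using Some P unfolding CS_def Let_def by (auto simp: abs_le_iff)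
qed

definition good_true :: "'a list \<Rightarrow> real \<Rightarrow> real \<Rightarrow> ('a set \<times> 'a \<times> real \<times> bool) list \<Rightarrow> 'a set \<Rightarrow> real \<Rightarrow> bool" where
 "good_true us d \<alpha> L S0 ww \<longleftrightarrow> (\<exists>p. ww = d*(1-\<alpha>)^p \<and> (p = 0 \<or> (\<forall>ob\<in>set us. ob \<in> S0 \<or> (\<exists>S'. (S',ob,d*(1-\<alpha>)^(p-1),False) \<in> set L \<and> S' \<subseteq> S0))))"

definition Kinv where
 "Kinv R \<kappa> \<alpha> \<epsilon> \<delta> us smp d p D st \<longleftrightarrow> (case st of (S,L) \<Rightarrow>
   S \<subseteq> set us \<and> (\<forall>k<length L. snd(snd(snd(L!k))) = CS R (length us) \<kappa> \<alpha> \<epsilon> \<delta> (fst(snd(snd(L!k)))) (smp k)) \<and>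
   (\<forall>(S0,u,ww,r)\<in>set L. S0 \<subseteq> S \<and> u \<in> set us \<and> card S0 < \<kappa> \<and> (r \<longrightarrow> u \<in> S) \<and> (r \<longrightarrow> good_true us d \<alpha> L S0 ww)) \<and>
   (p = 0 \<or> \<kappa> \<le> card S \<or> (\<forall>ob\<in>set us. ob \<in> S \<or> (\<exists>S'. (S',ob,d*(1-\<alpha>)^(p-1),False) \<in> set L))) \<and>
   (\<forall>ob\<in>D. \<kappa> \<le> card S \<or> ob \<in> S \<or> (\<exists>S'. (S',ob,d*(1-\<alpha>)^p,False) \<in> set L)))"

lemma good_true_mono: "good_true us d \<alpha> L S0 ww \<Longrightarrow> set L \<subseteq> set L' \<Longrightarrow> good_true us d \<alpha> L' S0 ww"
  unfolding good_true_def by blast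

lemma Kinv_step:
  assumes K: "Kinv R \<kappa> \<alpha> \<epsilon> \<delta> us smp d p D (S,L)" and u: "u \<in> set us"
  shows "Kinv R \<kappa> \<alpha> \<epsilon> \<delta> us smp d p (insert u D) (ctg_step R (length us) \<kappa> \<alpha> \<epsilon> \<delta> (d*(1-\<alpha>)^p) smp (S,L) u)"
proof (cases "card S < \<kappa>")
  case False
  then show ?thesis using K unfolding Kinv_def ctg_step_def by auto
next
  case True
  define r where "r = CS R (length us) \<kappa> \<alpha> \<epsilon> \<delta> (d*(1-\<alpha>)^p) (smp (length L))"
  define S' where "S' = (if r then insert u S else S)"
  define L' where "L' = L @ [(S, u, d*(1-\<alpha>)^p, r)]"
  have eq: "ctg_step R (length us) \<kappa> \<alpha> \<epsilon> \<delta> (d*(1-\<alpha>)^p) smp (S,L) u = (S', L')"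
    unfolding ctg_step_def r_def S'_def L'_def using True by simp
  have S: "S \<subseteq> set us" using K unfolding Kinv_def by simp
  have SS': "S \<subseteq> S'" "S' \<subseteq> set us" using S u unfolding S'_def by auto
  have fin: "finite S'" using SS' finite_subset by blast
  have cardm: "card S \<le> card S'" using SS' fin card_mono by blast
  have LL': "set L \<subseteq> set L'" unfolding L'_def by auto
  have A: "\<forall>k<length L'. snd(snd(snd(L'!k))) = CS R (length us) \<kappa> \<alpha> \<epsilon> \<delta> (fst(snd(snd(L'!k)))) (smp k)"
  proof (intro allI impI)
    fix k assume k: "k < length L'"
    show "snd(snd(snd(L'!k))) = CS R (length us) \<kappa> \<alpha> \<epsilon> \<delta> (fst(snd(snd(L'!k)))) (smp k)"
    proof (cases "k < length L")
      case True then show ?thesis using K unfolding Kinv_def L'_def by (auto simp: nth_append)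
    next
      case False then have "k = length L" using k unfolding L'_def by auto
      then show ?thesis unfolding L'_def r_def by simp
    qed
  qed
  have start: "p = 0 \<or> (\<forall>ob\<in>set us. ob \<in> S \<or> (\<exists>S'. (S',ob,d*(1-\<alpha>)^(p-1),False) \<in> set L))"
    using K True unfolding Kinv_def by auto
  have entL: "\<forall>(S0,u,ww,r)\<in>set L. S0 \<subseteq> S \<and> u \<in> set us \<and> card S0 < \<kappa> \<and> (r \<longrightarrow> u \<in> S) \<and> (r \<longrightarrow> good_true us d \<alpha> L S0 ww)"
    using K unfolding Kinv_def by simp
  have gnew: "good_true us d \<alpha> L' S (d*(1-\<alpha>)^p)"
    unfolding good_true_def
  proof (intro exI[of _ p] conjI refl)
    show "p = 0 \<or> (\<forall>ob\<in>set us. ob \<in> S \<or> (\<exists>S'. (S',ob,d*(1-\<alpha>)^(p-1),False) \<in> set L' \<and> S' \<subseteq> S))"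
      using start entL LL' by fastforce
  qed
  have ent: "\<forall>(S0,v,ww,r')\<in>set L'. S0 \<subseteq> S' \<and> v \<in> set us \<and> card S0 < \<kappa> \<and> (r' \<longrightarrow> v \<in> S') \<and> (r' \<longrightarrow> good_true us d \<alpha> L' S0 ww)"
  proof (intro ballI, clarify)
    fix S0 v ww r' assume m: "(S0,v,ww,r') \<in> set L'"
    show "S0 \<subseteq> S' \<and> v \<in> set us \<and> card S0 < \<kappa> \<and> (r' \<longrightarrow> v \<in> S') \<and> (r' \<longrightarrow> good_true us d \<alpha> L' S0 ww)"
    proof (cases "(S0,v,ww,r') \<in> set L")
      case True
      then show ?thesis using entL SS' LL' good_true_mono by fastforce
    next
      case False
      then have "S0 = S" "v = u" "ww = d*(1-\<alpha>)^p" "r' = r" using m unfolding L'_def by auto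
      then show ?thesis using SS' u True gnew unfolding S'_def by auto
    qed
  qed
  have st2: "p = 0 \<or> \<kappa> \<le> card S' \<or> (\<forall>ob\<in>set us. ob \<in> S' \<or> (\<exists>S''. (S'',ob,d*(1-\<alpha>)^(p-1),False) \<in> set L'))"
    using start SS' LL' by blast
  have Dold: "\<forall>ob\<in>D. \<kappa> \<le> card S \<or> ob \<in> S \<or> (\<exists>S''. (S'',ob,d*(1-\<alpha>)^p,False) \<in> set L)"
    using K unfolding Kinv_def by simp
  have D2: "\<forall>ob\<in>insert u D. \<kappa> \<le> card S' \<or> ob \<in> S' \<or> (\<exists>S''. (S'',ob,d*(1-\<alpha>)^p,False) \<in> set L')"
  proof
    fix ob assume "ob \<in> insert u D"
    then consider "ob = u" | "ob \<in> D" by auto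
    then show "\<kappa> \<le> card S' \<or> ob \<in> S' \<or> (\<exists>S''. (S'',ob,d*(1-\<alpha>)^p,False) \<in> set L')"
    proof cases
      case 1 then show ?thesis unfolding S'_def L'_def by (cases r) auto
    next
      case 2 then show ?thesis using Dold cardm SS' LL' by fastforce
    qed
  qed
  show ?thesis unfolding eq Kinv_def using SS' A ent st2 D2 by simp
qed

lemma Kinv_fold:
  "Kinv R \<kappa> \<alpha> \<epsilon> \<delta> us smp d p D st \<Longrightarrow> set xs \<subseteq> set us \<Longrightarrow>
   Kinv R \<kappa> \<alpha> \<epsilon> \<delta> us smp d p (D \<union> set xs) (foldl (ctg_step R (length us) \<kappa> \<alpha> \<epsilon> \<delta> (d*(1-\<alpha>)^p) smp) st xs)"
proof (induction xs arbitrary: D st)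
  case Nil then show ?case by simp
next
  case (Cons x xs)
  obtain S L where st: "st = (S,L)" by (cases st)
  have "Kinv R \<kappa> \<alpha> \<epsilon> \<delta> us smp d p (insert x D) (ctg_step R (length us) \<kappa> \<alpha> \<epsilon> \<delta> (d*(1-\<alpha>)^p) smp st x)"
    using Kinv_step Cons.prems st by auto
  from Cons.IH[OF this] Cons.prems show ?case by simp
qed

lemma Kinv_pass:
  assumes "Kinv R \<kappa> \<alpha> \<epsilon> \<delta> us smp d p {} st"
  shows "Kinv R \<kappa> \<alpha> \<epsilon> \<delta> us smp d (Suc p) {} (ctg_pass R \<kappa> \<alpha> \<epsilon> \<delta> us (d*(1-\<alpha>)^p) smp st)"
proof -
  have K: "Kinv R \<kappa> \<alpha> \<epsilon> \<delta> us smp d p (set us) (ctg_pass R \<kappa> \<alpha> \<epsilon> \<delta> us (d*(1-\<alpha>)^p) smp st)"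
    using Kinv_fold[OF assms, of us] unfolding ctg_pass_def by simp
  obtain S L where e: "ctg_pass R \<kappa> \<alpha> \<epsilon> \<delta> us (d*(1-\<alpha>)^p) smp st = (S,L)" by fastforce
  show ?thesis using K unfolding e Kinv_def by auto
qed

lemma Kinv_run:
  "Kinv R \<kappa> \<alpha> \<epsilon> \<delta> us smp d N {} (foldl (\<lambda>st p. ctg_pass R \<kappa> \<alpha> \<epsilon> \<delta> us (d * (1 - \<alpha>) ^ p) smp st) ({}, []) [0..<N])"
proof (induction N)
  case 0 then show ?case unfolding Kinv_def by simp
next
  case (Suc N) then show ?case using Kinv_pass by simp
qed

lemma sub_telescope:
  assumes submod: "submodular_set_fun U f" and fin: "finite A"
  shows "A \<subseteq> U - S \<Longrightarrow> S \<subseteq> U \<Longrightarrow> f (S \<union> A) - f S \<le> (\<Sum>a\<in>A. Delta f S a)"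
  using fin
proof (induction A rule: finite_induct)
  case empty then show ?case by simp
next
  case (insert a A)
  have "Delta f (S \<union> A) a \<le> Delta f S a"
    proof -
    have "S \<subseteq> S \<union> A \<and> S \<union> A \<subseteq> U \<and> a \<in> U - (S \<union> A)"
      using insert.prems insert.hyps by auto
    then show ?thesis using submod unfolding submodular_set_fun_def by blast
  qed
  moreover have "f (S \<union> insert a A) = f (S \<union> A) + Delta f (S \<union> A) a"
    unfolding Delta_def by simp
  ultimately show ?case using insert by simp
qed

lemma sub_bound:
  assumes mono: "monotone_set_fun U f" and submod: "submodular_set_fun U f"
    and fin: "finite U" and S: "S \<subseteq> U" and Opt: "Op \<subseteq> U" and cO: "card Op \<le> \<kappa>"
    and B: "\<forall>ob\<in>Op-S. Delta f S ob \<le> B" and B0: "B \<ge> 0"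
  shows "f Op - f S \<le> real \<kappa> * B"
proof -
  have fO: "finite (Op - S)" using fin Opt finite_subset by blast
  have "f Op \<le> f (S \<union> (Op - S))" using mono S Opt unfolding monotone_set_fun_def by auto
  moreover have "f (S \<union> (Op - S)) - f S \<le> (\<Sum>a\<in>Op-S. Delta f S a)"
    using sub_telescope[OF submod fO, of S] S Opt by blast
  moreover have "(\<Sum>a\<in>Op-S. Delta f S a) \<le> (\<Sum>a\<in>Op-S. B)" using B by (intro sum_mono) auto
  moreover have "card (Op - S) \<le> \<kappa>" using cO fin Opt finite_subset card_mono
    by (metis Diff_subset le_trans)
  then have "(\<Sum>a\<in>Op-S. B) \<le> real \<kappa> * B" using B0 by (simp add: mult_right_mono)
  ultimately show ?thesis by linarith
qed

theorem lemma5: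
  fixes us :: "'a list" and f :: "'a set \<Rightarrow> real" and \<kappa> :: nat
    and R \<epsilon> \<delta> \<alpha> :: real and OPT :: "'a set"
    and smp0 :: "'a \<Rightarrow> nat \<Rightarrow> real" and smp :: "nat \<Rightarrow> nat \<Rightarrow> real"
  assumes dist: "distinct us"
    and mono: "monotone_set_fun (set us) f"
    and submod: "submodular_set_fun (set us) f"
    and nonneg: "\<forall>X \<subseteq> set us. f X \<ge> 0"
    and f_empty: "f {} = 0"
    and kappa: "\<kappa> > 0"
    and OPT: "OPT \<subseteq> set us" "card OPT \<le> \<kappa>"
    and OPT_max: "\<forall>X. X \<subseteq> set us \<and> card X \<le> \<kappa> \<longrightarrow> f X \<le> f OPT"
    and R: "R > 0"
    and params: "0 < \<epsilon>" "\<epsilon> < 1" "0 < \<delta>" "\<delta> < 1" "0 < \<alpha>" "\<alpha> < 1"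
    and smp0_range: "\<forall>s\<in>set us. \<forall>i. 0 \<le> smp0 s i \<and> smp0 s i \<le> R"
    and smp_range: "\<forall>k i. 0 \<le> smp k i \<and> smp k i \<le> R"
    and E1: "Max ((\<lambda>s. f {s}) ` set us) - \<epsilon> \<le> ctg_d R \<epsilon> \<delta> us smp0 \<and>
             ctg_d R \<epsilon> \<delta> us smp0 \<le> Max ((\<lambda>s. f {s}) ` set us) + \<epsilon>"
    and E2: "\<forall>k < length (snd (ctg_run R \<kappa> \<alpha> \<epsilon> \<delta> us smp0 smp)).
               \<forall>S u w r. snd (ctg_run R \<kappa> \<alpha> \<epsilon> \<delta> us smp0 smp) ! k = (S, u, w, r) \<longrightarrow>
                 (\<forall>t\<ge>1. \<bar>avg (smp k) t - Delta f S u\<bar> \<le> Ct R (length us) \<kappa> \<alpha> \<delta> t)"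
    and E3: "\<forall>k < length (snd (ctg_run R \<kappa> \<alpha> \<epsilon> \<delta> us smp0 smp)).
               \<forall>S u w r. snd (ctg_run R \<kappa> \<alpha> \<epsilon> \<delta> us smp0 smp) ! k = (S, u, w, r) \<longrightarrow>
                 \<bar>avg (smp k) (N2 R (length us) \<kappa> \<alpha> \<epsilon> \<delta>) - Delta f S u\<bar> \<le> \<epsilon>"
  shows "\<forall>(S, s, w, r) \<in> set (snd (ctg_run R \<kappa> \<alpha> \<epsilon> \<delta> us smp0 smp)).
           r \<longrightarrow> Delta f S s \<ge> (1 - \<alpha>) / real \<kappa> * (f OPT - f S) - 2 * \<epsilon>"
proof (intro ballI, clarify)
  fix S s w r assume mem0: "(S, s, w, r) \<in> set (snd (ctg_run R \<kappa> \<alpha> \<epsilon> \<delta> us smp0 smp))" and rr: r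
  from mem0 rr have mem: "(S, s, w, True) \<in> set (snd (ctg_run R \<kappa> \<alpha> \<epsilon> \<delta> us smp0 smp))" by simp
  define d where "d = ctg_d R \<epsilon> \<delta> us smp0"
  define N where "N = ctg_npasses d \<kappa> \<alpha>"
  obtain Sf Lf where run: "ctg_run R \<kappa> \<alpha> \<epsilon> \<delta> us smp0 smp = (Sf, Lf)" by fastforce
  have K: "Kinv R \<kappa> \<alpha> \<epsilon> \<delta> us smp d N {} (Sf, Lf)"
    using Kinv_run[of R \<kappa> \<alpha> \<epsilon> \<delta> us smp d N] run unfolding ctg_run_def Let_def d_def N_def by simp
  from mem run obtain k where k: "k < length Lf" "Lf ! k = (S, s, w, True)"
    by (auto simp: in_set_conv_nth)
  have A: "\<forall>k<length Lf. snd(snd(snd(Lf!k))) = CS R (length us) \<kappa> \<alpha> \<epsilon> \<delta> (fst(snd(snd(Lf!k)))) (smp k)"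
   and ent: "\<forall>(S0,u,ww,r)\<in>set Lf. S0 \<subseteq> Sf \<and> u \<in> set us \<and> card S0 < \<kappa> \<and> (r \<longrightarrow> u \<in> Sf) \<and> (r \<longrightarrow> good_true us d \<alpha> Lf S0 ww)"
   and Sf: "Sf \<subseteq> set us"
    using K unfolding Kinv_def by auto
  have bnd: "\<And>k S u ww r. k < length Lf \<Longrightarrow> Lf ! k = (S,u,ww,r) \<Longrightarrow>
      (r \<longrightarrow> Delta f S u \<ge> ww - \<epsilon>) \<and> (\<not> r \<longrightarrow> Delta f S u \<le> ww + \<epsilon>)"
  proof -
    fix k S u ww r assume kk: "k < length Lf" "Lf ! k = (S,u,ww,r)"
    have "r = CS R (length us) \<kappa> \<alpha> \<epsilon> \<delta> ww (smp k)" using A kk by force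
    moreover have "\<forall>t\<ge>1. \<bar>avg (smp k) t - Delta f S u\<bar> \<le> Ct R (length us) \<kappa> \<alpha> \<delta> t"
      using E2 kk run by auto
    moreover have "\<bar>avg (smp k) (N2 R (length us) \<kappa> \<alpha> \<epsilon> \<delta>) - Delta f S u\<bar> \<le> \<epsilon>"
      using E3 kk run by auto
    ultimately show "(r \<longrightarrow> Delta f S u \<ge> ww - \<epsilon>) \<and> (\<not> r \<longrightarrow> Delta f S u \<le> ww + \<epsilon>)"
      using CS_bound by blast
  qed
  have lowD: "Delta f S s \<ge> w - \<epsilon>" using bnd[OF k] by simp
  have memL: "(S, s, w, True) \<in> set Lf" using mem run by simp
  have SU: "S \<subseteq> set us" and sU: "s \<in> set us" and cS: "card S < \<kappa>" and gt: "good_true us d \<alpha> Lf S w"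
  proof -
    have "S \<subseteq> Sf \<and> s \<in> set us \<and> card S < \<kappa> \<and> good_true us d \<alpha> Lf S w"
      using ent memL by fastforce
    then show "S \<subseteq> set us" "s \<in> set us" "card S < \<kappa>" "good_true us d \<alpha> Lf S w"
      using Sf by auto
  qed
  have fin: "finite (set us)" by simp
  have ne: "set us \<noteq> {}" using sU by auto
  define M where "M = Max ((\<lambda>s. f {s}) ` set us)"
  have d0: "d \<ge> 0"
  proof -
    have "avg (smp0 s) (N1 R (length us) \<epsilon> \<delta>) \<ge> 0"
      unfolding avg_def using smp0_range sU by (intro divide_nonneg_nonneg sum_nonneg) auto
    moreover have "avg (smp0 s) (N1 R (length us) \<epsilon> \<delta>) \<le> d"
      unfolding d_def ctg_d_def using sU by (intro Max_ge) auto
    ultimately show ?thesis by linarith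
  qed
  have fac: "(1 - \<alpha>) / real \<kappa> \<ge> 0" using params by simp
  have kpos: "real \<kappa> > 0" using kappa by simp
  from gt obtain p where wp: "w = d*(1-\<alpha>)^p" and
    alt: "p = 0 \<or> (\<forall>ob\<in>set us. ob \<in> S \<or> (\<exists>S'. (S',ob,d*(1-\<alpha>)^(p-1),False) \<in> set Lf \<and> S' \<subseteq> S))"
    unfolding good_true_def by blast
  have sub_le: "\<And>S' ob. S' \<subseteq> S \<Longrightarrow> ob \<in> set us \<Longrightarrow> ob \<notin> S \<Longrightarrow> Delta f S ob \<le> Delta f S' ob"
    using submod SU unfolding submodular_set_fun_def by blast
  show "Delta f S s \<ge> (1 - \<alpha>) / real \<kappa> * (f OPT - f S) - 2 * \<epsilon>"
  proof (cases "p = 0")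
    case True
    then have wd: "w = d" using wp by simp
    have B: "\<forall>ob\<in>OPT - S. Delta f S ob \<le> M"
    proof
      fix ob assume ob: "ob \<in> OPT - S"
      then have obU: "ob \<in> set us" using OPT by auto
      have "Delta f S ob \<le> Delta f {} ob" using sub_le[of "{}" ob] obU ob by auto
      also have "\<dots> = f {ob}" unfolding Delta_def using f_empty by simp
      also have "\<dots> \<le> M" unfolding M_def using obU by (intro Max_ge) auto
      finally show "Delta f S ob \<le> M" .
    qed
    have M0: "M \<ge> 0"
    proof -
      have "f {s} \<ge> 0" using nonneg sU by auto
      moreover have "f {s} \<le> M" unfolding M_def using sU by (intro Max_ge) auto
      ultimately show ?thesis by linarith
    qed
    have X: "f OPT - f S \<le> real \<kappa> * M"
      using sub_bound[OF mono submod fin SU OPT B M0] .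
    have "(1 - \<alpha>) / real \<kappa> * (f OPT - f S) \<le> (1 - \<alpha>) / real \<kappa> * (real \<kappa> * M)"
      using mult_left_mono[OF X fac] .
    also have "\<dots> = (1 - \<alpha>) * M" using kpos by simp
    also have "\<dots> \<le> M" using M0 params by (simp add: mult_left_le_one_le)
    finally have "(1 - \<alpha>) / real \<kappa> * (f OPT - f S) \<le> M" .
    moreover have "d \<ge> M - \<epsilon>" using E1 unfolding M_def d_def by simp
    ultimately show ?thesis using lowD wd by linarith
  next
    case False
    define w' where "w' = d*(1-\<alpha>)^(p-1)"
    have ww: "w = (1 - \<alpha>) * w'" unfolding wp w'_def using False
      by (metis Suc_pred' bot_nat_0.not_eq_extremum mult.left_commute power_Suc mult.commute)
    have w'0: "w' \<ge> 0" unfolding w'_def using d0 params by simp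
    have B: "\<forall>ob\<in>OPT - S. Delta f S ob \<le> w' + \<epsilon>"
    proof
      fix ob assume ob: "ob \<in> OPT - S"
      then have obU: "ob \<in> set us" using OPT by auto
      then obtain S' where S': "(S',ob,w',False) \<in> set Lf" "S' \<subseteq> S"
        using alt False ob unfolding w'_def by auto
      then obtain k' where k': "k' < length Lf" "Lf ! k' = (S',ob,w',False)" by (auto simp: in_set_conv_nth)
      have "Delta f S ob \<le> Delta f S' ob" using sub_le[OF S'(2) obU] ob by auto
      also have "\<dots> \<le> w' + \<epsilon>" using bnd[OF k'] by simp
      finally show "Delta f S ob \<le> w' + \<epsilon>" .
    qed
    have B0: "w' + \<epsilon> \<ge> 0" using w'0 params by simp
    have X: "f OPT - f S \<le> real \<kappa> * (w' + \<epsilon>)"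
      using sub_bound[OF mono submod fin SU OPT B B0] .
    have "(1 - \<alpha>) / real \<kappa> * (f OPT - f S) \<le> (1 - \<alpha>) / real \<kappa> * (real \<kappa> * (w' + \<epsilon>))"
      using mult_left_mono[OF X fac] .
    also have "\<dots> = (1 - \<alpha>) * (w' + \<epsilon>)" using kpos by simp
    also have "\<dots> = w + (1 - \<alpha>) * \<epsilon>" using ww by (simp add: algebra_simps)
    also have "\<dots> \<le> w + \<epsilon>" using params by (simp add: mult_left_le_one_le)
    finally have "(1 - \<alpha>) / real \<kappa> * (f OPT - f S) \<le> w + \<epsilon>" .
    then show ?thesis using lowD by linarith
  qed
qed

end
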